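(* Let $B$ be a finite skew left brace and $X\subseteq B$ with $|X|\ge3$, $\lambda_a(X)=X$ and $\sigma_a(X)=X$ for all $a\in B$, such that $B$ is additively generated by $X$, the ideal $V$ generated by $\{x-y:x,y\in X\}$ is the smallest non-zero ideal of $B$, $B/V$ is a trivial skew left brace of cyclic type, and $V$ acts transitively on $X$ (the group $\{\sigma_a\lambda_b|_X:a,b\in V\}$ is transitive on $X$). Then $B^{(3)}=0$ if and only if $\lambda_x=\lambda_y$ for all $x,y\in X$. Moreover, if $B^{(3)}=0$ then $\lambda_v=\mathrm{id}$ for every $v\in V$.
   Context: A skew left brace $(B,+,\circ)$: $(B,+)$ and $(B,\circ)$ are groups with $a\circ(b+c)=a\circ b-a+a\circ c$; $\lambda_a(b)=-a+a\circ b$ (an automorphism of $(B,+)$ with $\lambda_{a\circ b}=\lambda_a\lambda_b$), $\sigma_a(b)=-a+b+a$, $a*b=-a+a\circ b-b$. An ideal is a normal subgroup $I$ of $(B,+)$ with $\lambda_a(I)\subseteq I$ for all $a$ and normal in $(B,\circ)$; smallest non-zero ideal = non-zero ideal contained in every non-zero ideal. $I*J$ is the additive subgroup generated by $\{i*j\}$; $B^{(2)}=B*B$, $B^{(3)}=B^{(2)}*B$. $B/V$ is trivial if its two operations coincide, and of cyclic type if its additive group is cyclic. *)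

theory Defs
  imports "HOL-Algebra.Algebra"
begin

text \<open>A skew left brace is given by two group structures A (the additive group,
written with the HOL-Algebra multiplicative syntax) and M (the multiplicative
group, operation \<circ>) on the same carrier.\<close>

definition skew_brace :: "'a monoid \<Rightarrow> 'a monoid \<Rightarrow> bool" where
  "skew_brace A M \<longleftrightarrow> group A \<and> group M \<and> carrier A = carrier M \<and>
     (\<forall>a\<in>carrier A. \<forall>b\<in>carrier A. \<forall>c\<in>carrier A.
        a \<otimes>\<^bsub>M\<^esub> (b \<otimes>\<^bsub>A\<^esub> c)
          = (a \<otimes>\<^bsub>M\<^esub> b) \<otimes>\<^bsub>A\<^esub> inv\<^bsub>A\<^esub> a \<otimes>\<^bsub>A\<^esub> (a \<otimes>\<^bsub>M\<^esub> c))"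

definition lam :: "'a monoid \<Rightarrow> 'a monoid \<Rightarrow> 'a \<Rightarrow> 'a \<Rightarrow> 'a" where
  "lam A M a b = inv\<^bsub>A\<^esub> a \<otimes>\<^bsub>A\<^esub> (a \<otimes>\<^bsub>M\<^esub> b)"

definition sig :: "'a monoid \<Rightarrow> 'a \<Rightarrow> 'a \<Rightarrow> 'a" where
  "sig A a b = inv\<^bsub>A\<^esub> a \<otimes>\<^bsub>A\<^esub> b \<otimes>\<^bsub>A\<^esub> a"

definition bstar :: "'a monoid \<Rightarrow> 'a monoid \<Rightarrow> 'a \<Rightarrow> 'a \<Rightarrow> 'a" where
  "bstar A M a b = inv\<^bsub>A\<^esub> a \<otimes>\<^bsub>A\<^esub> (a \<otimes>\<^bsub>M\<^esub> b) \<otimes>\<^bsub>A\<^esub> inv\<^bsub>A\<^esub> b"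

definition brace_ideal :: "'a monoid \<Rightarrow> 'a monoid \<Rightarrow> 'a set \<Rightarrow> bool" where
  "brace_ideal A M I \<longleftrightarrow> normal I A \<and> (\<forall>a\<in>carrier A. lam A M a ` I \<subseteq> I) \<and> normal I M"

definition ideal_gen :: "'a monoid \<Rightarrow> 'a monoid \<Rightarrow> 'a set \<Rightarrow> 'a set" where
  "ideal_gen A M S = carrier A \<inter> \<Inter> {I. brace_ideal A M I \<and> S \<subseteq> I}"

definition smallest_nonzero_ideal :: "'a monoid \<Rightarrow> 'a monoid \<Rightarrow> 'a set \<Rightarrow> bool" where
  "smallest_nonzero_ideal A M V \<longleftrightarrow> brace_ideal A M V \<and> V \<noteq> {\<one>\<^bsub>A\<^esub>} \<and>
     (\<forall>I. brace_ideal A M I \<and> I \<noteq> {\<one>\<^bsub>A\<^esub>} \<longrightarrow> V \<subseteq> I)"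

definition star_prod :: "'a monoid \<Rightarrow> 'a monoid \<Rightarrow> 'a set \<Rightarrow> 'a set \<Rightarrow> 'a set" where
  "star_prod A M I J = generate A {bstar A M i j | i j. i \<in> I \<and> j \<in> J}"

definition B2 :: "'a monoid \<Rightarrow> 'a monoid \<Rightarrow> 'a set" where
  "B2 A M = star_prod A M (carrier A) (carrier A)"

definition B3 :: "'a monoid \<Rightarrow> 'a monoid \<Rightarrow> 'a set" where
  "B3 A M = star_prod A M (B2 A M) (carrier A)"

definition trivial_quotient :: "'a monoid \<Rightarrow> 'a monoid \<Rightarrow> 'a set \<Rightarrow> bool" where
  "trivial_quotient A M V \<longleftrightarrow> carrier (A Mod V) = carrier (M Mod V) \<and>
     (\<forall>P\<in>carrier (A Mod V). \<forall>Q\<in>carrier (A Mod V).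
        monoid.mult (A Mod V) P Q = monoid.mult (M Mod V) P Q)"

definition cyclic_grp :: "('a, 'b) monoid_scheme \<Rightarrow> bool" where
  "cyclic_grp G \<longleftrightarrow> (\<exists>g\<in>carrier G. generate G {g} = carrier G)"

end

theory Submission
  imports Defs
begin


locale sbr =
  fixes A M :: "'a monoid"
  assumes sb: "skew_brace A M"
begin

lemma grpA: "group A" using sb unfolding skew_brace_def by auto
lemma grpM: "group M" using sb unfolding skew_brace_def by auto
sublocale A: group A by (rule grpA)
sublocale M: group M by (rule grpM)

lemma car: "carrier M = carrier A" using sb unfolding skew_brace_def by auto

lemma dist: "a \<in> carrier A \<Longrightarrow> b \<in> carrier A \<Longrightarrow> c \<in> carrier A \<Longrightarrow>
  a \<otimes>\<^bsub>M\<^esub> (b \<otimes>\<^bsub>A\<^esub> c) = (a \<otimes>\<^bsub>M\<^esub> b) \<otimes>\<^bsub>A\<^esub> inv\<^bsub>A\<^esub> a \<otimes>\<^bsub>A\<^esub> (a \<otimes>\<^bsub>M\<^esub> c)"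
  using sb unfolding skew_brace_def by auto

lemma Mc[simp]: "a \<in> carrier A \<Longrightarrow> b \<in> carrier A \<Longrightarrow> a \<otimes>\<^bsub>M\<^esub> b \<in> carrier A"
  using car M.m_closed by auto
lemma Mic[simp]: "a \<in> carrier A \<Longrightarrow> inv\<^bsub>M\<^esub> a \<in> carrier A"
  using car M.inv_closed by auto

lemma one_eq: "\<one>\<^bsub>M\<^esub> = \<one>\<^bsub>A\<^esub>"
proof -
  have o: "\<one>\<^bsub>M\<^esub> \<in> carrier A" using car by auto
  have "\<one>\<^bsub>M\<^esub> \<otimes>\<^bsub>M\<^esub> (\<one>\<^bsub>A\<^esub> \<otimes>\<^bsub>A\<^esub> \<one>\<^bsub>A\<^esub>) = (\<one>\<^bsub>M\<^esub> \<otimes>\<^bsub>M\<^esub> \<one>\<^bsub>A\<^esub>) \<otimes>\<^bsub>A\<^esub> inv\<^bsub>A\<^esub> \<one>\<^bsub>M\<^esub> \<otimes>\<^bsub>A\<^esub> (\<one>\<^bsub>M\<^esub> \<otimes>\<^bsub>M\<^esub> \<one>\<^bsub>A\<^esub>)"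
    using dist[OF o A.one_closed A.one_closed] .
  moreover have l: "\<And>x. x \<in> carrier A \<Longrightarrow> \<one>\<^bsub>M\<^esub> \<otimes>\<^bsub>M\<^esub> x = x" by (metis M.l_one car)
  ultimately have "\<one>\<^bsub>A\<^esub> = inv\<^bsub>A\<^esub> \<one>\<^bsub>M\<^esub>" using o by (simp add: A.m_assoc)
  thus ?thesis using o by (metis A.inv_inv A.inv_one)
qed

lemma lam_closed[simp]: "a \<in> carrier A \<Longrightarrow> b \<in> carrier A \<Longrightarrow> lam A M a b \<in> carrier A"
  unfolding lam_def by simp

lemma circ_eq: "a \<in> carrier A \<Longrightarrow> b \<in> carrier A \<Longrightarrow> a \<otimes>\<^bsub>M\<^esub> b = a \<otimes>\<^bsub>A\<^esub> lam A M a b"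
  unfolding lam_def by (simp add: A.m_assoc[symmetric])

lemma lam_add: "a \<in> carrier A \<Longrightarrow> b \<in> carrier A \<Longrightarrow> c \<in> carrier A \<Longrightarrow>
   lam A M a (b \<otimes>\<^bsub>A\<^esub> c) = lam A M a b \<otimes>\<^bsub>A\<^esub> lam A M a c"
  unfolding lam_def by (simp add: dist A.m_assoc)

lemma lam_one[simp]: "a \<in> carrier A \<Longrightarrow> lam A M a \<one>\<^bsub>A\<^esub> = \<one>\<^bsub>A\<^esub>"
  unfolding lam_def using one_eq[symmetric] car by (simp add: M.r_one[unfolded car])

lemma lam_inv: "a \<in> carrier A \<Longrightarrow> b \<in> carrier A \<Longrightarrow> lam A M a (inv\<^bsub>A\<^esub> b) = inv\<^bsub>A\<^esub> (lam A M a b)"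
proof -
  assume a: "a \<in> carrier A" and b: "b \<in> carrier A"
  have "lam A M a (inv\<^bsub>A\<^esub> b) \<otimes>\<^bsub>A\<^esub> lam A M a b = \<one>\<^bsub>A\<^esub>"
    using lam_add[of a "inv\<^bsub>A\<^esub> b" b] a b by simp
  thus ?thesis using a b A.inv_equality by simp
qed

lemma lam_comp: "a \<in> carrier A \<Longrightarrow> b \<in> carrier A \<Longrightarrow> c \<in> carrier A \<Longrightarrow>
   lam A M (a \<otimes>\<^bsub>M\<^esub> b) c = lam A M a (lam A M b c)"
proof -
  assume a: "a \<in> carrier A" and b: "b \<in> carrier A" and c: "c \<in> carrier A"
  have "(a \<otimes>\<^bsub>M\<^esub> b) \<otimes>\<^bsub>M\<^esub> c = a \<otimes>\<^bsub>M\<^esub> (b \<otimes>\<^bsub>A\<^esub> lam A M b c)"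
    using a b c car by (simp add: M.m_assoc circ_eq[of b c])
  also have "\<dots> = (a \<otimes>\<^bsub>M\<^esub> b) \<otimes>\<^bsub>A\<^esub> inv\<^bsub>A\<^esub> a \<otimes>\<^bsub>A\<^esub> (a \<otimes>\<^bsub>M\<^esub> lam A M b c)"
    using a b c by (simp add: dist)
  finally have e: "(a \<otimes>\<^bsub>M\<^esub> b) \<otimes>\<^bsub>M\<^esub> c = (a \<otimes>\<^bsub>M\<^esub> b) \<otimes>\<^bsub>A\<^esub> inv\<^bsub>A\<^esub> a \<otimes>\<^bsub>A\<^esub> (a \<otimes>\<^bsub>M\<^esub> lam A M b c)" .
  show ?thesis unfolding lam_def[of A M "a \<otimes>\<^bsub>M\<^esub> b"] e
    using a b c by (simp add: A.m_assoc[symmetric] lam_def)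
qed

lemma lam_1[simp]: "c \<in> carrier A \<Longrightarrow> lam A M \<one>\<^bsub>A\<^esub> c = c"
  unfolding lam_def using one_eq car by (metis A.inv_one A.l_one M.l_one Mc A.one_closed)

lemma lam_invM1[simp]: "a \<in> carrier A \<Longrightarrow> c \<in> carrier A \<Longrightarrow> lam A M (inv\<^bsub>M\<^esub> a) (lam A M a c) = c"
  using lam_comp[of "inv\<^bsub>M\<^esub> a" a c] car one_eq by simp
lemma lam_invM2[simp]: "a \<in> carrier A \<Longrightarrow> c \<in> carrier A \<Longrightarrow> lam A M a (lam A M (inv\<^bsub>M\<^esub> a) c) = c"
  using lam_comp[of a "inv\<^bsub>M\<^esub> a" c] car one_eq by simp


lemma gen_hom:
  assumes S: "S \<subseteq> carrier A" and T: "subgroup T A"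
    and hm: "\<And>a b. a \<in> carrier A \<Longrightarrow> b \<in> carrier A \<Longrightarrow> f (a \<otimes>\<^bsub>A\<^esub> b) = f a \<otimes>\<^bsub>A\<^esub> f b"
    and hi: "\<And>a. a \<in> carrier A \<Longrightarrow> f (inv\<^bsub>A\<^esub> a) = inv\<^bsub>A\<^esub> (f a)"
    and h1: "f \<one>\<^bsub>A\<^esub> = \<one>\<^bsub>A\<^esub>"
    and hs: "\<And>s. s \<in> S \<Longrightarrow> f s \<in> T"
    and g: "g \<in> generate A S"
  shows "f g \<in> T"
  using g
proof induction
  case one thus ?case using h1 subgroup.one_closed[OF T] by simp
next
  case (incl h) thus ?case using hs by simp
next
  case (inv h) thus ?case using hs hi S subgroup.m_inv_closed[OF T] by auto
next
  case (eng h1 h2) thus ?case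
    using hm A.generate_in_carrier[OF S] subgroup.m_closed[OF T] by simp
qed

lemma lam_self_inv: "w \<in> carrier A \<Longrightarrow> lam A M w (inv\<^bsub>M\<^esub> w) = inv\<^bsub>A\<^esub> w"
  unfolding lam_def using car one_eq by (simp add: M.r_inv[unfolded car])

lemma ideal_crit:
  assumes N: "normal I A" and L: "\<forall>c\<in>carrier A. lam A M c ` I \<subseteq> I"
    and C: "\<forall>w\<in>I. \<forall>a\<in>carrier A. lam A M w a \<otimes>\<^bsub>A\<^esub> inv\<^bsub>A\<^esub> a \<in> I"
  shows "brace_ideal A M I"
proof -
  have sg: "subgroup I A" using N normal_imp_subgroup by blast
  have sub: "I \<subseteq> carrier A" using subgroup.subset[OF sg] .
  have Lm: "\<And>c x. c \<in> carrier A \<Longrightarrow> x \<in> I \<Longrightarrow> lam A M c x \<in> I" using L by blast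
  have sgM: "subgroup I M"
  proof (rule M.subgroupI)
    show "I \<subseteq> carrier M" using sub car by simp
    show "I \<noteq> {}" using subgroup.one_closed[OF sg] by blast
  next
    fix w assume w: "w \<in> I"
    hence wc: "w \<in> carrier A" using sub by blast
    have "inv\<^bsub>M\<^esub> w = lam A M (inv\<^bsub>M\<^esub> w) (lam A M w (inv\<^bsub>M\<^esub> w))" using wc by simp
    also have "\<dots> = lam A M (inv\<^bsub>M\<^esub> w) (inv\<^bsub>A\<^esub> w)" using wc lam_self_inv by simp
    finally show "inv\<^bsub>M\<^esub> w \<in> I" using Lm[of "inv\<^bsub>M\<^esub> w" "inv\<^bsub>A\<^esub> w"] wc w subgroup.m_inv_closed[OF sg] by simp
  next
    fix w v assume w: "w \<in> I" and v: "v \<in> I"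
    hence "w \<otimes>\<^bsub>M\<^esub> v = w \<otimes>\<^bsub>A\<^esub> lam A M w v" using sub circ_eq by blast
    thus "w \<otimes>\<^bsub>M\<^esub> v \<in> I" using Lm w v sub subgroup.m_closed[OF sg] by auto
  qed
  have conj: "a \<otimes>\<^bsub>M\<^esub> w \<otimes>\<^bsub>M\<^esub> inv\<^bsub>M\<^esub> a \<in> I" if a: "a \<in> carrier A" and w: "w \<in> I" for a w
  proof -
    define b where "b = inv\<^bsub>M\<^esub> a"
    have b: "b \<in> carrier A" using a b_def by simp
    have wc: "w \<in> carrier A" using w sub by blast
    define i where "i = w \<otimes>\<^bsub>A\<^esub> (lam A M w b \<otimes>\<^bsub>A\<^esub> inv\<^bsub>A\<^esub> b)"
    have i: "i \<in> I" unfolding i_def using C w b subgroup.m_closed[OF sg] by auto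
    have ic: "i \<in> carrier A" using i sub by blast
    define j where "j = inv\<^bsub>A\<^esub> b \<otimes>\<^bsub>A\<^esub> i \<otimes>\<^bsub>A\<^esub> b"
    have j: "j \<in> I" unfolding j_def using N i b A.normal_inv_iff[of I]
      by (metis A.inv_closed A.inv_inv)
    have jc: "j \<in> carrier A" using j sub by blast
    define k where "k = lam A M a j"
    have k: "k \<in> I" unfolding k_def using Lm a j by blast
    have kc: "k \<in> carrier A" using k sub by blast
    have "b \<otimes>\<^bsub>M\<^esub> k = b \<otimes>\<^bsub>A\<^esub> lam A M b k" using circ_eq b kc by blast
    also have "\<dots> = b \<otimes>\<^bsub>A\<^esub> j" unfolding k_def b_def using a jc by simp
    also have "\<dots> = i \<otimes>\<^bsub>A\<^esub> b" unfolding j_def using b ic by (simp add: A.m_assoc[symmetric])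
    also have "\<dots> = w \<otimes>\<^bsub>A\<^esub> lam A M w b" unfolding i_def using b wc by (simp add: A.m_assoc)
    also have "\<dots> = w \<otimes>\<^bsub>M\<^esub> b" using circ_eq b wc by simp
    finally have e: "b \<otimes>\<^bsub>M\<^esub> k = w \<otimes>\<^bsub>M\<^esub> b" .
    have "a \<otimes>\<^bsub>M\<^esub> w \<otimes>\<^bsub>M\<^esub> inv\<^bsub>M\<^esub> a = a \<otimes>\<^bsub>M\<^esub> (w \<otimes>\<^bsub>M\<^esub> b)" using a wc car b_def by (simp add: M.m_assoc)
    also have "\<dots> = a \<otimes>\<^bsub>M\<^esub> (b \<otimes>\<^bsub>M\<^esub> k)" using e by simp
    also have "\<dots> = k" using a kc car b_def by (simp add: M.m_assoc[symmetric])
    finally show ?thesis using k by simp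
  qed
  have "normal I M" using sgM conj car M.normal_inv_iff by auto
  thus ?thesis unfolding brace_ideal_def using N L by blast
qed


end


context sbr begin

lemma canc1[simp]: "x \<in> carrier A \<Longrightarrow> y \<in> carrier A \<Longrightarrow> inv\<^bsub>A\<^esub> x \<otimes>\<^bsub>A\<^esub> (x \<otimes>\<^bsub>A\<^esub> y) = y"
  by (simp add: A.m_assoc[symmetric])
lemma canc2[simp]: "x \<in> carrier A \<Longrightarrow> y \<in> carrier A \<Longrightarrow> x \<otimes>\<^bsub>A\<^esub> (inv\<^bsub>A\<^esub> x \<otimes>\<^bsub>A\<^esub> y) = y"
  by (simp add: A.m_assoc[symmetric])
lemma diff1: "u \<in> carrier A \<Longrightarrow> b \<in> carrier A \<Longrightarrow> u \<otimes>\<^bsub>A\<^esub> inv\<^bsub>A\<^esub> b = \<one>\<^bsub>A\<^esub> \<Longrightarrow> u = b"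
  by (metis A.inv_closed A.l_inv A.m_assoc A.r_one A.l_one)

definition K where "K = {a \<in> carrier A. \<forall>b\<in>carrier A. lam A M a b = b}"

lemma K_sub: "subgroup K A"
proof (rule A.subgroupI)
  show "K \<subseteq> carrier A" unfolding K_def by auto
  show "K \<noteq> {}" unfolding K_def using lam_1 A.one_closed by blast
next
  fix a assume aK: "a \<in> K"
  hence a: "a \<in> carrier A" and la: "\<And>b. b \<in> carrier A \<Longrightarrow> lam A M a b = b" unfolding K_def by auto
  have "a \<otimes>\<^bsub>M\<^esub> inv\<^bsub>A\<^esub> a = \<one>\<^bsub>M\<^esub>" using circ_eq[of a "inv\<^bsub>A\<^esub> a"] a la one_eq by simp
  moreover have "inv\<^bsub>M\<^esub> a \<otimes>\<^bsub>M\<^esub> (a \<otimes>\<^bsub>M\<^esub> inv\<^bsub>A\<^esub> a) = inv\<^bsub>A\<^esub> a"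
    using a car by (simp add: M.m_assoc[symmetric])
  ultimately have e: "inv\<^bsub>M\<^esub> a = inv\<^bsub>A\<^esub> a" using a car by simp
  have "lam A M (inv\<^bsub>A\<^esub> a) b = b" if b: "b \<in> carrier A" for b
    using lam_invM1[of a b] la[OF b] e a b by simp
  thus "inv\<^bsub>A\<^esub> a \<in> K" unfolding K_def using a by simp
next
  fix a c assume "a \<in> K" "c \<in> K"
  hence a: "a \<in> carrier A" and la: "\<And>b. b \<in> carrier A \<Longrightarrow> lam A M a b = b"
    and c: "c \<in> carrier A" and lc: "\<And>b. b \<in> carrier A \<Longrightarrow> lam A M c b = b" unfolding K_def by auto
  have e: "a \<otimes>\<^bsub>A\<^esub> c = a \<otimes>\<^bsub>M\<^esub> c" using circ_eq a c la by simp
  have "lam A M (a \<otimes>\<^bsub>A\<^esub> c) b = b" if b: "b \<in> carrier A" for b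
    unfolding e using lam_comp a c b la lc by simp
  thus "a \<otimes>\<^bsub>A\<^esub> c \<in> K" unfolding K_def using a c by simp
qed

definition B2s where "B2s = {bstar A M i j | i j. i \<in> carrier A \<and> j \<in> carrier A}"

lemma bstar_eq: "bstar A M i j = lam A M i j \<otimes>\<^bsub>A\<^esub> inv\<^bsub>A\<^esub> j"
  unfolding bstar_def lam_def ..

lemma B2s_sub: "B2s \<subseteq> carrier A" unfolding B2s_def bstar_eq by auto

lemma B2_gen: "B2 A M = generate A B2s" unfolding B2_def star_prod_def B2s_def ..

lemma B2_ideal: "brace_ideal A M (B2 A M)"
proof (rule ideal_crit)
  have sg: "subgroup (B2 A M) A" unfolding B2_gen using A.generate_is_subgroup B2s_sub by blast
  have "x \<otimes>\<^bsub>A\<^esub> h \<otimes>\<^bsub>A\<^esub> inv\<^bsub>A\<^esub> x \<in> B2 A M" if x: "x \<in> carrier A" and h: "h \<in> B2 A M" for x h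
  proof -
    have "(\<lambda>h. x \<otimes>\<^bsub>A\<^esub> h \<otimes>\<^bsub>A\<^esub> inv\<^bsub>A\<^esub> x) h \<in> B2 A M"
    proof (rule gen_hom[OF B2s_sub sg, where f="\<lambda>h. x \<otimes>\<^bsub>A\<^esub> h \<otimes>\<^bsub>A\<^esub> inv\<^bsub>A\<^esub> x" and g=h])
      show "h \<in> generate A B2s" using h B2_gen by simp
      show "x \<otimes>\<^bsub>A\<^esub> \<one>\<^bsub>A\<^esub> \<otimes>\<^bsub>A\<^esub> inv\<^bsub>A\<^esub> x = \<one>\<^bsub>A\<^esub>" using x by simp
    next
      fix a b assume "a \<in> carrier A" "b \<in> carrier A"
      thus "x \<otimes>\<^bsub>A\<^esub> (a \<otimes>\<^bsub>A\<^esub> b) \<otimes>\<^bsub>A\<^esub> inv\<^bsub>A\<^esub> x = x \<otimes>\<^bsub>A\<^esub> a \<otimes>\<^bsub>A\<^esub> inv\<^bsub>A\<^esub> x \<otimes>\<^bsub>A\<^esub> (x \<otimes>\<^bsub>A\<^esub> b \<otimes>\<^bsub>A\<^esub> inv\<^bsub>A\<^esub> x)"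
        using x by (simp add: A.m_assoc)
    next
      fix a assume "a \<in> carrier A"
      thus "x \<otimes>\<^bsub>A\<^esub> inv\<^bsub>A\<^esub> a \<otimes>\<^bsub>A\<^esub> inv\<^bsub>A\<^esub> x = inv\<^bsub>A\<^esub> (x \<otimes>\<^bsub>A\<^esub> a \<otimes>\<^bsub>A\<^esub> inv\<^bsub>A\<^esub> x)"
        using x by (simp add: A.m_assoc A.inv_mult_group)
    next
      fix s assume "s \<in> B2s"
      then obtain a b where a: "a \<in> carrier A" and b: "b \<in> carrier A" and s: "s = lam A M a b \<otimes>\<^bsub>A\<^esub> inv\<^bsub>A\<^esub> b"
        unfolding B2s_def bstar_eq by auto
      have "x \<otimes>\<^bsub>A\<^esub> s \<otimes>\<^bsub>A\<^esub> inv\<^bsub>A\<^esub> x = inv\<^bsub>A\<^esub> (lam A M a x \<otimes>\<^bsub>A\<^esub> inv\<^bsub>A\<^esub> x) \<otimes>\<^bsub>A\<^esub> (lam A M a (x \<otimes>\<^bsub>A\<^esub> b) \<otimes>\<^bsub>A\<^esub> inv\<^bsub>A\<^esub> (x \<otimes>\<^bsub>A\<^esub> b))"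
        using a b x s by (simp add: lam_add A.m_assoc A.inv_mult_group)
      moreover have "lam A M a x \<otimes>\<^bsub>A\<^esub> inv\<^bsub>A\<^esub> x \<in> B2s" unfolding B2s_def bstar_eq using a x by blast
      moreover have "lam A M a (x \<otimes>\<^bsub>A\<^esub> b) \<otimes>\<^bsub>A\<^esub> inv\<^bsub>A\<^esub> (x \<otimes>\<^bsub>A\<^esub> b) \<in> B2s" unfolding B2s_def bstar_eq using a x b by blast
      ultimately show "x \<otimes>\<^bsub>A\<^esub> s \<otimes>\<^bsub>A\<^esub> inv\<^bsub>A\<^esub> x \<in> B2 A M" unfolding B2_gen
        by (metis generate.inv generate.incl generate.eng)
    qed
    thus ?thesis by simp
  qed
  thus "normal (B2 A M) A" using sg A.normal_inv_iff by blast
  show "\<forall>c\<in>carrier A. lam A M c ` B2 A M \<subseteq> B2 A M"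
  proof (intro ballI subsetI)
    fix c y assume c: "c \<in> carrier A" and "y \<in> lam A M c ` B2 A M"
    then obtain h where h: "h \<in> B2 A M" and y: "y = lam A M c h" by blast
    show "y \<in> B2 A M" unfolding y
    proof (rule gen_hom[OF B2s_sub sg, where f="lam A M c" and g=h])
      show "h \<in> generate A B2s" using h B2_gen by simp
    next
      fix s assume "s \<in> B2s"
      then obtain a b where a: "a \<in> carrier A" and b: "b \<in> carrier A" and s: "s = lam A M a b \<otimes>\<^bsub>A\<^esub> inv\<^bsub>A\<^esub> b"
        unfolding B2s_def bstar_eq by auto
      define a' where "a' = c \<otimes>\<^bsub>M\<^esub> a \<otimes>\<^bsub>M\<^esub> inv\<^bsub>M\<^esub> c"
      have a': "a' \<in> carrier A" unfolding a'_def using a c by simp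
      have "lam A M a' (lam A M c b) = lam A M c (lam A M a b)"
        unfolding a'_def using a b c by (simp add: lam_comp)
      hence "lam A M c s = lam A M a' (lam A M c b) \<otimes>\<^bsub>A\<^esub> inv\<^bsub>A\<^esub> (lam A M c b)"
        using s a b c by (simp add: lam_add lam_inv)
      moreover have "\<dots> \<in> B2s" unfolding B2s_def bstar_eq using a' lam_closed[OF c b] by blast
      ultimately show "lam A M c s \<in> B2 A M" unfolding B2_gen by (simp add: generate.incl)
    next
      fix a b assume "a \<in> carrier A" "b \<in> carrier A"
      thus "lam A M c (a \<otimes>\<^bsub>A\<^esub> b) = lam A M c a \<otimes>\<^bsub>A\<^esub> lam A M c b" using c lam_add by blast
    next
      fix a assume "a \<in> carrier A"
      thus "lam A M c (inv\<^bsub>A\<^esub> a) = inv\<^bsub>A\<^esub> (lam A M c a)" using c lam_inv by blast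
    next
      show "lam A M c \<one>\<^bsub>A\<^esub> = \<one>\<^bsub>A\<^esub>" using c by simp
    qed
  qed
  show "\<forall>w\<in>B2 A M. \<forall>a\<in>carrier A. lam A M w a \<otimes>\<^bsub>A\<^esub> inv\<^bsub>A\<^esub> a \<in> B2 A M"
  proof (intro ballI)
    fix w a assume "w \<in> B2 A M" "a \<in> carrier A"
    moreover have "B2 A M \<subseteq> carrier A" using sg subgroup.subset by blast
    ultimately have "lam A M w a \<otimes>\<^bsub>A\<^esub> inv\<^bsub>A\<^esub> a \<in> B2s" unfolding B2s_def bstar_eq by blast
    thus "lam A M w a \<otimes>\<^bsub>A\<^esub> inv\<^bsub>A\<^esub> a \<in> B2 A M" unfolding B2_gen by (simp add: generate.incl)
  qed
qed

lemma B3_iff: "B3 A M = {\<one>\<^bsub>A\<^esub>} \<longleftrightarrow> B2 A M \<subseteq> K"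
proof -
  have B2c: "B2 A M \<subseteq> carrier A" unfolding B2_gen using A.generate_incl B2s_sub by blast
  define G3 where "G3 = {bstar A M i j | i j. i \<in> B2 A M \<and> j \<in> carrier A}"
  have B3g: "B3 A M = generate A G3" unfolding B3_def star_prod_def G3_def ..
  show ?thesis
  proof
    assume e: "B3 A M = {\<one>\<^bsub>A\<^esub>}"
    show "B2 A M \<subseteq> K" 
    proof
      fix i assume i: "i \<in> B2 A M"
      have "lam A M i b = b" if b: "b \<in> carrier A" for b
      proof -
      have "bstar A M i b \<in> B3 A M" unfolding B3g G3_def by (rule generate.incl) (use i b in blast)
      hence "bstar A M i b = \<one>\<^bsub>A\<^esub>" using e by blast
      hence "lam A M i b \<otimes>\<^bsub>A\<^esub> inv\<^bsub>A\<^esub> b = \<one>\<^bsub>A\<^esub>" unfolding bstar_eq .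
      moreover have ic: "i \<in> carrier A" using i B2c by blast
      ultimately show "lam A M i b = b" using diff1[OF lam_closed[OF ic b] b] by blast
      qed
      thus "i \<in> K" unfolding K_def using i B2c by blast
    qed
  next
    assume s: "B2 A M \<subseteq> K"
    have "G3 \<subseteq> {\<one>\<^bsub>A\<^esub>}"
    proof
      fix g assume "g \<in> G3"
      then obtain i j where i: "i \<in> B2 A M" and j: "j \<in> carrier A" and g: "g = lam A M i j \<otimes>\<^bsub>A\<^esub> inv\<^bsub>A\<^esub> j"
        unfolding G3_def bstar_eq by auto
      have "lam A M i j = j" using s i j unfolding K_def by auto
      thus "g \<in> {\<one>\<^bsub>A\<^esub>}" using g j by simp
    qed
    hence "generate A G3 \<subseteq> {\<one>\<^bsub>A\<^esub>}" by (rule A.generate_subgroup_incl[OF _ A.triv_subgroup])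
    moreover have "\<one>\<^bsub>A\<^esub> \<in> generate A G3" by (rule generate.one)
    ultimately show "B3 A M = {\<one>\<^bsub>A\<^esub>}" unfolding B3g by blast
  qed
qed


context
  fixes Xs :: "'a set"
  assumes Xsub: "Xs \<subseteq> carrier A"
    and lamX: "\<forall>a\<in>carrier A. lam A M a ` Xs = Xs"
    and sigX: "\<forall>a\<in>carrier A. sig A a ` Xs = Xs"
    and gen: "generate A Xs = carrier A"
begin

definition "DD = {x \<otimes>\<^bsub>A\<^esub> inv\<^bsub>A\<^esub> y | x y. x \<in> Xs \<and> y \<in> Xs}"
definition "WW = generate A DD"

lemma DD_sub: "DD \<subseteq> carrier A" unfolding DD_def using Xsub by auto

lemma WW_sg: "subgroup WW A" unfolding WW_def using A.generate_is_subgroup DD_sub by blast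

lemma lamXm: "a \<in> carrier A \<Longrightarrow> x \<in> Xs \<Longrightarrow> lam A M a x \<in> Xs" using lamX by blast

lemma WW_normal: "normal WW A"
proof -
  have "x \<otimes>\<^bsub>A\<^esub> h \<otimes>\<^bsub>A\<^esub> inv\<^bsub>A\<^esub> x \<in> WW" if x: "x \<in> carrier A" and h: "h \<in> WW" for x h
  proof -
    have "(\<lambda>h. x \<otimes>\<^bsub>A\<^esub> h \<otimes>\<^bsub>A\<^esub> inv\<^bsub>A\<^esub> x) h \<in> WW"
    proof (rule gen_hom[OF DD_sub WW_sg, where f="\<lambda>h. x \<otimes>\<^bsub>A\<^esub> h \<otimes>\<^bsub>A\<^esub> inv\<^bsub>A\<^esub> x" and g=h])
      show "h \<in> generate A DD" using h WW_def by simp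
      show "x \<otimes>\<^bsub>A\<^esub> \<one>\<^bsub>A\<^esub> \<otimes>\<^bsub>A\<^esub> inv\<^bsub>A\<^esub> x = \<one>\<^bsub>A\<^esub>" using x by simp
    next
      fix a b assume "a \<in> carrier A" "b \<in> carrier A"
      thus "x \<otimes>\<^bsub>A\<^esub> (a \<otimes>\<^bsub>A\<^esub> b) \<otimes>\<^bsub>A\<^esub> inv\<^bsub>A\<^esub> x = x \<otimes>\<^bsub>A\<^esub> a \<otimes>\<^bsub>A\<^esub> inv\<^bsub>A\<^esub> x \<otimes>\<^bsub>A\<^esub> (x \<otimes>\<^bsub>A\<^esub> b \<otimes>\<^bsub>A\<^esub> inv\<^bsub>A\<^esub> x)"
        using x by (simp add: A.m_assoc)
    next
      fix a assume "a \<in> carrier A"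
      thus "x \<otimes>\<^bsub>A\<^esub> inv\<^bsub>A\<^esub> a \<otimes>\<^bsub>A\<^esub> inv\<^bsub>A\<^esub> x = inv\<^bsub>A\<^esub> (x \<otimes>\<^bsub>A\<^esub> a \<otimes>\<^bsub>A\<^esub> inv\<^bsub>A\<^esub> x)"
        using x by (simp add: A.m_assoc A.inv_mult_group)
    next
      fix s assume "s \<in> DD"
      then obtain p q where p: "p \<in> Xs" and q: "q \<in> Xs" and s: "s = p \<otimes>\<^bsub>A\<^esub> inv\<^bsub>A\<^esub> q"
        unfolding DD_def by auto
      have pc: "p \<in> carrier A" and qc: "q \<in> carrier A" using p q Xsub by auto
      have cX: "x \<otimes>\<^bsub>A\<^esub> r \<otimes>\<^bsub>A\<^esub> inv\<^bsub>A\<^esub> x \<in> Xs" if r: "r \<in> Xs" for r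
      proof -
        have "sig A (inv\<^bsub>A\<^esub> x) r \<in> Xs" using sigX x r by blast
        moreover have "sig A (inv\<^bsub>A\<^esub> x) r = x \<otimes>\<^bsub>A\<^esub> r \<otimes>\<^bsub>A\<^esub> inv\<^bsub>A\<^esub> x" unfolding sig_def using x by simp
        ultimately show ?thesis by simp
      qed
      have "x \<otimes>\<^bsub>A\<^esub> s \<otimes>\<^bsub>A\<^esub> inv\<^bsub>A\<^esub> x = (x \<otimes>\<^bsub>A\<^esub> p \<otimes>\<^bsub>A\<^esub> inv\<^bsub>A\<^esub> x) \<otimes>\<^bsub>A\<^esub> inv\<^bsub>A\<^esub> (x \<otimes>\<^bsub>A\<^esub> q \<otimes>\<^bsub>A\<^esub> inv\<^bsub>A\<^esub> x)"
        using pc qc x s by (simp add: A.m_assoc A.inv_mult_group)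
      moreover have "\<dots> \<in> DD" unfolding DD_def using cX p q by blast
      ultimately show "x \<otimes>\<^bsub>A\<^esub> s \<otimes>\<^bsub>A\<^esub> inv\<^bsub>A\<^esub> x \<in> WW" unfolding WW_def by (simp add: generate.incl)
    qed
    thus ?thesis by simp
  qed
  thus ?thesis using WW_sg A.normal_inv_iff by blast
qed

lemma WW_conj: "x \<in> carrier A \<Longrightarrow> h \<in> WW \<Longrightarrow> x \<otimes>\<^bsub>A\<^esub> h \<otimes>\<^bsub>A\<^esub> inv\<^bsub>A\<^esub> x \<in> WW"
  using WW_normal A.normal_inv_iff by blast

lemma WW_crit: "w \<in> carrier A \<Longrightarrow> a \<in> carrier A \<Longrightarrow> lam A M w a \<otimes>\<^bsub>A\<^esub> inv\<^bsub>A\<^esub> a \<in> WW"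
proof -
  assume w: "w \<in> carrier A" and "a \<in> carrier A"
  hence "a \<in> generate A Xs" using gen by simp
  thus ?thesis
  proof induction
    case one
    show ?case using w generate.one[of A DD] unfolding WW_def by simp
  next
    case (incl x)
    hence "lam A M w x \<otimes>\<^bsub>A\<^esub> inv\<^bsub>A\<^esub> x \<in> DD" unfolding DD_def using lamXm w by blast
    thus ?case unfolding WW_def by (rule generate.incl)
  next
    case (inv x)
    have xc: "x \<in> carrier A" using inv Xsub by blast
    define x' where "x' = lam A M w x"
    have x'c: "x' \<in> carrier A" unfolding x'_def using w xc by simp
    have "x \<otimes>\<^bsub>A\<^esub> inv\<^bsub>A\<^esub> x' \<in> DD" unfolding DD_def x'_def using lamXm w inv by blast
    hence "x \<otimes>\<^bsub>A\<^esub> inv\<^bsub>A\<^esub> x' \<in> WW" unfolding WW_def by (rule generate.incl)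
    hence "inv\<^bsub>A\<^esub> x' \<otimes>\<^bsub>A\<^esub> (x \<otimes>\<^bsub>A\<^esub> inv\<^bsub>A\<^esub> x') \<otimes>\<^bsub>A\<^esub> inv\<^bsub>A\<^esub> (inv\<^bsub>A\<^esub> x') \<in> WW"
      using WW_conj[OF A.inv_closed[OF x'c]] by blast
    moreover have "inv\<^bsub>A\<^esub> x' \<otimes>\<^bsub>A\<^esub> (x \<otimes>\<^bsub>A\<^esub> inv\<^bsub>A\<^esub> x') \<otimes>\<^bsub>A\<^esub> inv\<^bsub>A\<^esub> (inv\<^bsub>A\<^esub> x') = lam A M w (inv\<^bsub>A\<^esub> x) \<otimes>\<^bsub>A\<^esub> inv\<^bsub>A\<^esub> (inv\<^bsub>A\<^esub> x)"
      unfolding x'_def using w xc by (simp add: lam_inv A.m_assoc)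
    ultimately show ?case by simp
  next
    case (eng h1 h2)
    have h1: "h1 \<in> carrier A" and h2: "h2 \<in> carrier A" using eng.hyps A.generate_in_carrier[OF Xsub] by auto
    have e: "lam A M w (h1 \<otimes>\<^bsub>A\<^esub> h2) \<otimes>\<^bsub>A\<^esub> inv\<^bsub>A\<^esub> (h1 \<otimes>\<^bsub>A\<^esub> h2) =
        (lam A M w h1 \<otimes>\<^bsub>A\<^esub> inv\<^bsub>A\<^esub> h1) \<otimes>\<^bsub>A\<^esub> (h1 \<otimes>\<^bsub>A\<^esub> (lam A M w h2 \<otimes>\<^bsub>A\<^esub> inv\<^bsub>A\<^esub> h2) \<otimes>\<^bsub>A\<^esub> inv\<^bsub>A\<^esub> h1)"
      using w h1 h2 by (simp add: lam_add A.m_assoc A.inv_mult_group)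
    have "h1 \<otimes>\<^bsub>A\<^esub> (lam A M w h2 \<otimes>\<^bsub>A\<^esub> inv\<^bsub>A\<^esub> h2) \<otimes>\<^bsub>A\<^esub> inv\<^bsub>A\<^esub> h1 \<in> WW"
      using WW_conj h1 eng.IH(2) by blast
    thus ?case unfolding e using eng.IH(1) subgroup.m_closed[OF WW_sg] by blast
  qed
qed

lemma WW_ideal: "brace_ideal A M WW"
proof (rule ideal_crit)
  show "normal WW A" by (rule WW_normal)
  show "\<forall>c\<in>carrier A. lam A M c ` WW \<subseteq> WW"
  proof (intro ballI subsetI)
    fix c y assume c: "c \<in> carrier A" and "y \<in> lam A M c ` WW"
    then obtain h where h: "h \<in> WW" and y: "y = lam A M c h" by blast
    show "y \<in> WW" unfolding y
    proof (rule gen_hom[OF DD_sub WW_sg, where f="lam A M c" and g=h])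
      show "h \<in> generate A DD" using h WW_def by simp
    next
      fix s assume "s \<in> DD"
      then obtain p q where p: "p \<in> Xs" and q: "q \<in> Xs" and s: "s = p \<otimes>\<^bsub>A\<^esub> inv\<^bsub>A\<^esub> q"
        unfolding DD_def by auto
      have pc: "p \<in> carrier A" and qc: "q \<in> carrier A" using p q Xsub by auto
      have "lam A M c s = lam A M c p \<otimes>\<^bsub>A\<^esub> inv\<^bsub>A\<^esub> (lam A M c q)"
        using s pc qc c by (simp add: lam_add lam_inv)
      moreover have "\<dots> \<in> DD" unfolding DD_def using lamXm c p q by blast
      ultimately show "lam A M c s \<in> WW" unfolding WW_def by (simp add: generate.incl)
    next
      fix a b assume "a \<in> carrier A" "b \<in> carrier A"
      thus "lam A M c (a \<otimes>\<^bsub>A\<^esub> b) = lam A M c a \<otimes>\<^bsub>A\<^esub> lam A M c b" using c lam_add by blast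
    next
      fix a assume "a \<in> carrier A"
      thus "lam A M c (inv\<^bsub>A\<^esub> a) = inv\<^bsub>A\<^esub> (lam A M c a)" using c lam_inv by blast
    next
      show "lam A M c \<one>\<^bsub>A\<^esub> = \<one>\<^bsub>A\<^esub>" using c by simp
    qed
  qed
  show "\<forall>w\<in>WW. \<forall>a\<in>carrier A. lam A M w a \<otimes>\<^bsub>A\<^esub> inv\<^bsub>A\<^esub> a \<in> WW"
    using WW_crit subgroup.subset[OF WW_sg] by blast
qed

end

end



theorem mainTheorem10:
  fixes A M :: "'a monoid" and Xs V :: "'a set"
  assumes brace: "skew_brace A M"
    and fin: "finite (carrier A)"
    and Xsub: "Xs \<subseteq> carrier A"
    and card3: "card Xs \<ge> 3"
    and lamX: "\<forall>a\<in>carrier A. lam A M a ` Xs = Xs"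
    and sigX: "\<forall>a\<in>carrier A. sig A a ` Xs = Xs"
    and gen: "generate A Xs = carrier A"
    and Vdef: "V = ideal_gen A M {monoid.mult A x (m_inv A y) | x y. x \<in> Xs \<and> y \<in> Xs}"
    and Vsmall: "smallest_nonzero_ideal A M V"
    and triv: "trivial_quotient A M V"
    and cyc: "cyclic_grp (A Mod V)"
    and trans: "\<forall>x\<in>Xs. \<forall>y\<in>Xs. \<exists>a\<in>V. \<exists>b\<in>V. sig A a (lam A M b x) = y"
  shows "(B3 A M = {one A} \<longleftrightarrow>
            (\<forall>x\<in>Xs. \<forall>y\<in>Xs. \<forall>b\<in>carrier A. lam A M x b = lam A M y b))
       \<and> (B3 A M = {one A} \<longrightarrow> (\<forall>v\<in>V. \<forall>b\<in>carrier A. lam A M v b = b))"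
proof -
  interpret S: sbr A M by (rule sbr.intro) (rule brace)
  note W = Xsub lamX sigX gen
  have Wi: "brace_ideal A M (S.WW Xs)" using S.WW_ideal[OF W] .
  have Wsg: "subgroup (S.WW Xs) A" using S.WW_sg[OF W] .
  have DW: "S.DD Xs \<subseteq> S.WW Xs" unfolding S.WW_def[OF W] by (blast intro: generate.incl)
  have Deq: "S.DD Xs = {monoid.mult A x (m_inv A y) | x y. x \<in> Xs \<and> y \<in> Xs}"
    unfolding S.DD_def[OF W] ..
  have Vc: "V \<subseteq> carrier A" unfolding Vdef ideal_gen_def by blast
  have DV: "S.DD Xs \<subseteq> V" unfolding Vdef ideal_gen_def Deq[symmetric]
    using S.DD_sub[OF W] by blast
  have VW: "V \<subseteq> S.WW Xs" unfolding Vdef ideal_gen_def Deq[symmetric] using Wi DW by blast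
  have B2W: "B2 A M \<subseteq> S.WW Xs" unfolding S.B2_gen
  proof (rule S.A.generate_subgroup_incl[OF _ Wsg])
    show "S.B2s \<subseteq> S.WW Xs" unfolding S.B2s_def S.bstar_eq using S.WW_crit[OF W] by blast
  qed
  have a: "V \<subseteq> S.K" if B2K: "B2 A M \<subseteq> S.K"
  proof (cases "B2 A M = {\<one>\<^bsub>A\<^esub>}")
    case True
    have "lam A M a b = b" if a: "a \<in> carrier A" and b: "b \<in> carrier A" for a b
    proof -
      have "bstar A M a b \<in> B2 A M" unfolding S.B2_gen
        by (rule generate.incl) (use a b in \<open>auto simp: S.B2s_def\<close>)
      hence "lam A M a b \<otimes>\<^bsub>A\<^esub> inv\<^bsub>A\<^esub> b = \<one>\<^bsub>A\<^esub>" using True unfolding S.bstar_eq by blast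
      thus ?thesis using S.diff1[OF S.lam_closed[OF a b] b] by blast
    qed
    thus ?thesis using Vc unfolding S.K_def by blast
  next
    case False
    thus ?thesis using Vsmall S.B2_ideal B2K unfolding smallest_nonzero_ideal_def by blast
  qed
  have b: "\<forall>x\<in>Xs. \<forall>y\<in>Xs. \<forall>b\<in>carrier A. lam A M x b = lam A M y b" if VK: "V \<subseteq> S.K"
  proof (intro ballI)
    fix x y b assume x: "x \<in> Xs" and y: "y \<in> Xs" and b: "b \<in> carrier A"
    have xc: "x \<in> carrier A" and yc: "y \<in> carrier A" using x y Xsub by auto
    define v where "v = x \<otimes>\<^bsub>A\<^esub> inv\<^bsub>A\<^esub> y"
    have "v \<in> S.DD Xs" unfolding v_def Deq using x y by blast
    hence vK: "v \<in> S.K" using DV VK by blast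
    hence vc: "v \<in> carrier A" and lv: "\<And>c. c \<in> carrier A \<Longrightarrow> lam A M v c = c" unfolding S.K_def by auto
    have "x = v \<otimes>\<^bsub>A\<^esub> y" unfolding v_def using xc yc by (simp add: S.A.m_assoc)
    also have "\<dots> = v \<otimes>\<^bsub>M\<^esub> y" using S.circ_eq[OF vc yc] lv[OF yc] by simp
    finally have "lam A M x b = lam A M (v \<otimes>\<^bsub>M\<^esub> y) b" by simp
    also have "\<dots> = lam A M y b" using S.lam_comp[OF vc yc b] lv[OF S.lam_closed[OF yc b]] by simp
    finally show "lam A M x b = lam A M y b" .
  qed
  have c: "V \<subseteq> S.K \<and> B2 A M \<subseteq> S.K" if eqL: "\<forall>x\<in>Xs. \<forall>y\<in>Xs. \<forall>b\<in>carrier A. lam A M x b = lam A M y b"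
  proof -
    have "S.DD Xs \<subseteq> S.K"
    proof
      fix s assume "s \<in> S.DD Xs"
      then obtain x y where x: "x \<in> Xs" and y: "y \<in> Xs" and s: "s = x \<otimes>\<^bsub>A\<^esub> inv\<^bsub>A\<^esub> y"
        unfolding Deq by blast
      have xc: "x \<in> carrier A" and yc: "y \<in> carrier A" using x y Xsub by auto
      define z where "z = lam A M (inv\<^bsub>M\<^esub> x) y"
      have z: "z \<in> Xs" unfolding z_def using lamX y xc S.Mic by blast
      have zc: "z \<in> carrier A" using z Xsub by blast
      have yz: "lam A M x z = y" unfolding z_def using xc yc by simp
      have "y \<otimes>\<^bsub>M\<^esub> inv\<^bsub>A\<^esub> z = y \<otimes>\<^bsub>A\<^esub> lam A M y (inv\<^bsub>A\<^esub> z)" using S.circ_eq yc zc by simp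
      also have "\<dots> = y \<otimes>\<^bsub>A\<^esub> inv\<^bsub>A\<^esub> (lam A M x z)" using S.lam_inv yc zc eqL[rule_format, OF x y zc] by simp
      also have "\<dots> = \<one>\<^bsub>M\<^esub>" using yz yc S.one_eq by simp
      finally have e1: "y \<otimes>\<^bsub>M\<^esub> inv\<^bsub>A\<^esub> z = \<one>\<^bsub>M\<^esub>" .
      have izc: "inv\<^bsub>A\<^esub> z \<in> carrier M" using zc S.car by simp
      have ycM: "y \<in> carrier M" using yc S.car by simp
      have "inv\<^bsub>M\<^esub> (inv\<^bsub>A\<^esub> z) = y" using S.M.inv_equality[OF e1 izc ycM] .
      hence e2: "inv\<^bsub>A\<^esub> z = inv\<^bsub>M\<^esub> y" using S.M.inv_inv[OF izc] by simp
      have "s = x \<otimes>\<^bsub>A\<^esub> lam A M x (inv\<^bsub>A\<^esub> z)" unfolding s using S.lam_inv xc zc yz by simp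
      also have "\<dots> = x \<otimes>\<^bsub>M\<^esub> inv\<^bsub>M\<^esub> y" using S.circ_eq[OF xc S.Mic[OF yc]] e2 by simp
      finally have se: "s = x \<otimes>\<^bsub>M\<^esub> inv\<^bsub>M\<^esub> y" .
      have "lam A M s b = b" if b: "b \<in> carrier A" for b
      proof -
        have "lam A M s b = lam A M x (lam A M (inv\<^bsub>M\<^esub> y) b)" unfolding se using S.lam_comp xc yc b by simp
        also have "\<dots> = lam A M y (lam A M (inv\<^bsub>M\<^esub> y) b)" using eqL[rule_format, OF x y S.lam_closed[OF S.Mic[OF yc] b]] by simp
        also have "\<dots> = b" using yc b by simp
        finally show ?thesis .
      qed
      moreover have "s \<in> carrier A" using se xc yc by simp
      ultimately show "s \<in> S.K" unfolding S.K_def by blast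
    qed
    hence "S.WW Xs \<subseteq> S.K" unfolding S.WW_def[OF W] by (rule S.A.generate_subgroup_incl[OF _ S.K_sub])
    thus ?thesis using VW B2W by blast
  qed
  have i1: "B3 A M = {\<one>\<^bsub>A\<^esub>} \<longleftrightarrow> (\<forall>x\<in>Xs. \<forall>y\<in>Xs. \<forall>b\<in>carrier A. lam A M x b = lam A M y b)"
  proof
    assume "B3 A M = {\<one>\<^bsub>A\<^esub>}"
    hence "B2 A M \<subseteq> S.K" by (rule S.B3_iff[THEN iffD1])
    thus "\<forall>x\<in>Xs. \<forall>y\<in>Xs. \<forall>b\<in>carrier A. lam A M x b = lam A M y b" by (rule b[OF a])
  next
    assume "\<forall>x\<in>Xs. \<forall>y\<in>Xs. \<forall>b\<in>carrier A. lam A M x b = lam A M y b"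
    hence "B2 A M \<subseteq> S.K" using c by blast
    thus "B3 A M = {\<one>\<^bsub>A\<^esub>}" by (rule S.B3_iff[THEN iffD2])
  qed
  have i2: "\<forall>v\<in>V. \<forall>b\<in>carrier A. lam A M v b = b" if h: "B3 A M = {\<one>\<^bsub>A\<^esub>}"
  proof -
    have "B2 A M \<subseteq> S.K" using h by (rule S.B3_iff[THEN iffD1])
    hence "V \<subseteq> S.K" by (rule a)
    thus ?thesis unfolding S.K_def by blast
  qed
  show ?thesis using i1 i2 by (intro conjI impI) auto
qed


end
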